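(* Let $f$ be an analytic function of the 5-complex variable $u$ on an open set, written $f(u)=\sum_{k=0}^4h_kP_k(x_0,x_1,x_2,x_3,x_4)$ with real-valued $P_k$ (and $h_0=1$). Then, with indices taken modulo 5, for every $k,m\in\{0,\dots,4\}$ and every $j\in\{0,\dots,4\}$, $$\frac{\partial P_{k+j}}{\partial x_j}=\frac{\partial P_k}{\partial x_0}$$ (e.g. $\partial P_0/\partial x_0=\partial P_1/\partial x_1=\dots=\partial P_4/\partial x_4$ and $\partial P_1/\partial x_0=\partial P_2/\partial x_1=\partial P_3/\partial x_2=\partial P_4/\partial x_3=\partial P_0/\partial x_4$), and $$\frac{\partial^2P_k}{\partial x_i\partial x_j}=\frac{\partial^2P_k}{\partial x_{i'}\partial x_{j'}}\quad\text{whenever } i+j\equiv i'+j'\pmod 5.$$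
   Context: A 5-complex number is $u=x_0+h_1x_1+h_2x_2+h_3x_3+h_4x_4$ with real $x_j$, with componentwise addition and the commutative associative bilinear multiplication determined by $h_jh_k=h_{(j+k)\bmod 5}$, $h_0=1$; identify it with the point $(x_0,\dots,x_4)\in\mathbb{R}^5$ and use the modulus $|u|=(\sum x_j^2)^{1/2}$. A 5-complex function $f$ is analytic if at each point $u_0$ of its domain the limit $f'(u_0)=\lim_{u\to u_0}\{f(u)-f(u_0)\}/(u-u_0)$ exists independently of the direction of approach (the quotient being taken with 5-complex multiplication by an inverse, along $u$ for which $u-u_0$ is invertible), with $f'$ again analytic (e.g. $f$ given locally by a convergent power series in $u$). *)

theory Defs
  imports "HOL-Analysis.Analysis" "HOL-Library.Numeral_Type"
begin

text \<open>5-complex numbers u = x0 + h1 x1 + ... + h4 x4 are identified with points of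
  real^5; the index type 5 has arithmetic modulo 5, so h_j h_k = h_((j+k) mod 5).\<close>

type_synonym tc5 = "real ^ 5"

definition tc_one :: tc5 where
  "tc_one = (\<chi> k. if k = 0 then 1 else 0)"

definition tc_mult :: "tc5 \<Rightarrow> tc5 \<Rightarrow> tc5" where
  "tc_mult u v = (\<chi> k. \<Sum>j\<in>UNIV. u $ j * v $ (k - j))"

definition tc_invertible :: "tc5 \<Rightarrow> bool" where
  "tc_invertible u \<longleftrightarrow> (\<exists>v. tc_mult u v = tc_one)"

definition tc_inverse :: "tc5 \<Rightarrow> tc5" where
  "tc_inverse u = (SOME v. tc_mult u v = tc_one)"

definition tc_has_deriv :: "(tc5 \<Rightarrow> tc5) \<Rightarrow> tc5 \<Rightarrow> tc5 \<Rightarrow> bool" where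
  "tc_has_deriv f D u0 \<longleftrightarrow>
     ((\<lambda>u. tc_mult (f u - f u0) (tc_inverse (u - u0))) \<longlongrightarrow> D)
       (at u0 within {u. tc_invertible (u - u0)})"

definition tc_analytic_on :: "(tc5 \<Rightarrow> tc5) \<Rightarrow> tc5 set \<Rightarrow> bool" where
  "tc_analytic_on f S \<longleftrightarrow>
     (\<exists>D :: nat \<Rightarrow> tc5 \<Rightarrow> tc5. D 0 = f \<and>
        (\<forall>n. \<forall>u\<in>S. tc_has_deriv (D n) (D (Suc n) u) u))"

definition has_partial :: "(tc5 \<Rightarrow> real) \<Rightarrow> 5 \<Rightarrow> tc5 \<Rightarrow> real \<Rightarrow> bool" where
  "has_partial P j x d \<longleftrightarrow> ((\<lambda>t. P (x + t *\<^sub>R axis j 1)) has_real_derivative d) (at 0)"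

definition partial :: "(tc5 \<Rightarrow> real) \<Rightarrow> 5 \<Rightarrow> tc5 \<Rightarrow> real" where
  "partial P j x = deriv (\<lambda>t. P (x + t *\<^sub>R axis j 1)) 0"

end

theory Submission
  imports Defs
begin
lemma tc_mult_axis_l: "tc_mult (axis j c) v = (\<chi> k. c * v $ (k - j))"
proof -
  have "(\<Sum>i\<in>UNIV. (if i = j then c else 0) * v $ (k - i)) = c * v $ (k - j)" for k :: 5
  proof -
    have "(\<Sum>i\<in>UNIV. (if i = j then c else 0) * v $ (k - i))
        = (\<Sum>i\<in>UNIV. if i = j then c * v $ (k - i) else 0)"
      by (rule sum.cong) auto
    also have "\<dots> = c * v $ (k - j)" by simp
    finally show ?thesis .
  qed
  then show ?thesis unfolding tc_mult_def vec_eq_iff axis_def by simp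
qed
lemma ax_inv: assumes "t \<noteq> 0" shows "tc_mult (axis j t) (axis (-j) (1/t)) = tc_one"
proof -
  have "t * axis (-j) (1/t) $ (k - j) = tc_one $ k" for k :: 5
  proof -
    have "(k - j = -j) = (k = 0)" by (metis add.commute add_diff_cancel diff_add_cancel diff_0)
    then show ?thesis using assms by (simp add: axis_def tc_one_def)
  qed
  then show ?thesis unfolding tc_mult_axis_l vec_eq_iff by simp
qed
lemma tc_mult_axis_r: "tc_mult w (axis j c) = (\<chi> k. w $ (k - j) * c)"
proof -
  have "(\<Sum>i\<in>UNIV. w $ i * (if k - i = j then c else 0)) = w $ (k - j) * c" for k :: 5
  proof -
    have "(\<Sum>i\<in>UNIV. w $ i * (if k - i = j then c else 0))
        = (\<Sum>i\<in>UNIV. if i = k - j then w $ i * c else 0)"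
      proof (rule sum.cong)
      fix i :: 5
      have "(k - i = j) = (i = k - j)" by (metis diff_diff_eq2 diff_add_cancel add_diff_cancel_left')
      then show "w $ i * (if k - i = j then c else 0) = (if i = k - j then w $ i * c else 0)" by simp
    qed simp
    also have "\<dots> = w $ (k - j) * c" by simp
    finally show ?thesis .
  qed
  then show ?thesis unfolding tc_mult_def vec_eq_iff axis_def by simp
qed

lemma axis_zero0: "axis j (0::real) = 0"
  by (simp add: vec_eq_iff axis_def)

lemma scale_axis: "t *\<^sub>R axis j (1::real) = axis j t"
  unfolding vec_eq_iff axis_def by simp

lemma tc_inverse_axis:
  assumes "t \<noteq> 0"
  shows "tc_inverse (axis j t) = axis (-j) (1/t)"
proof -
  have w: "tc_mult (axis j t) (axis (-j) (1/t)) = tc_one"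
    using ax_inv[OF assms] .
  have u: "v = axis (-j) (1/t)" if "tc_mult (axis j t) v = tc_one" for v
  proof -
    have "v $ m = axis (-j) (1/t) $ m" for m
    proof -
      have "t * v $ m = tc_one $ (m + j)"
        using arg_cong[OF that, of "\<lambda>z. z $ (m + j)"] unfolding tc_mult_axis_l by simp
      then have "t * v $ m = (if m = -j then 1 else 0)"
        unfolding tc_one_def by (auto simp: eq_neg_iff_add_eq_0)
      then show ?thesis using assms unfolding axis_def by (auto simp: field_simps)
    qed
    then show ?thesis by (simp add: vec_eq_iff)
  qed
  show ?thesis unfolding tc_inverse_def
    using w u by (metis (mono_tags, lifting) someI_ex)
qed

lemma key:
  assumes "tc_has_deriv g G x"
  shows "((\<lambda>t. g (x + t *\<^sub>R axis j 1) $ m) has_real_derivative G $ (m - j)) (at 0)"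
proof -
  let ?A = "{u. tc_invertible (u - x)}"
  have fl: "filterlim (\<lambda>t::real. x + t *\<^sub>R axis j 1) (at x within ?A) (at 0)"
  proof (rule filterlim_at_withinI)
    show "((\<lambda>t::real. x + t *\<^sub>R axis j 1) \<longlongrightarrow> x) (at 0)"
      by (rule tendsto_eq_intros | simp)+
    show "\<forall>\<^sub>F t in at (0::real). x + t *\<^sub>R axis j 1 \<in> ?A - {x}"
    proof (rule eventually_at_filter[THEN iffD2], rule always_eventually, intro allI impI)
      fix t :: real assume "t \<noteq> 0"
      then have "tc_mult (axis j t) (axis (-j) (1/t)) = tc_one"
        by (rule ax_inv)
      moreover have "axis j t \<noteq> (0::tc5)" using \<open>t \<noteq> 0\<close> by (simp add: axis_eq_0_iff)
      ultimately show "x + t *\<^sub>R axis j 1 \<in> ?A - {x}"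
        unfolding tc_invertible_def by (auto simp: scale_axis)
    qed
  qed
  have lim: "((\<lambda>t. tc_mult (g (x + t *\<^sub>R axis j 1) - g x) (tc_inverse (t *\<^sub>R axis j 1))) \<longlongrightarrow> G) (at (0::real))"
    using filterlim_compose[OF assms[unfolded tc_has_deriv_def] fl] by simp
  have lim2: "((\<lambda>t. tc_mult (g (x + t *\<^sub>R axis j 1) - g x) (tc_inverse (t *\<^sub>R axis j 1)) $ (m - j)) \<longlongrightarrow> G $ (m - j)) (at (0::real))"
    by (rule tendsto_vec_nth[OF lim])
  have "((\<lambda>t. (g (x + t *\<^sub>R axis j 1) $ m - g (x + 0 *\<^sub>R axis j 1) $ m) / (t - 0)) \<longlongrightarrow> G $ (m - j)) (at (0::real))"
  proof (rule Lim_transform_within[OF lim2 zero_less_one])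
    fix t :: real assume "0 < dist t 0" "dist t 0 < 1"
    then have "t \<noteq> 0" by simp
    then show "tc_mult (g (x + t *\<^sub>R axis j 1) - g x) (tc_inverse (t *\<^sub>R axis j 1)) $ (m - j)
        = (g (x + t *\<^sub>R axis j 1) $ m - g (x + 0 *\<^sub>R axis j 1) $ m) / (t - 0)"
      by (simp add: scale_axis tc_inverse_axis tc_mult_axis_r axis_zero0)
  qed
  then show ?thesis by (simp add: has_field_derivative_iff)
qed

theorem mainTheorem9:
  fixes f :: "tc5 \<Rightarrow> tc5" and S :: "tc5 set" and P :: "5 \<Rightarrow> tc5 \<Rightarrow> real"
  assumes "open S"
    and "tc_analytic_on f S"
    and "\<And>k u. P k u = f u $ k"
  shows "(\<forall>x\<in>S. \<forall>k j. \<exists>d. has_partial (P (k + j)) j x d \<and> has_partial (P k) 0 x d)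
       \<and> (\<forall>x\<in>S. \<forall>k i j i' j'. i + j = i' + j' \<longrightarrow>
            (\<exists>d. has_partial (partial (P k) j) i x d \<and> has_partial (partial (P k) j') i' x d))"
proof -
  obtain D where D0: "D 0 = f" and DD: "\<And>n u. u \<in> S \<Longrightarrow> tc_has_deriv (D n) (D (Suc n) u) u"
    using assms(2) unfolding tc_analytic_on_def by blast
  have Pf: "P = (\<lambda>k u. D 0 u $ k)" using assms(3) D0 by auto
  have part1: "has_partial (P m) j x (D 1 x $ (m - j))" if "x \<in> S" for x m j
    unfolding has_partial_def Pf using key[OF DD[OF that, of 0]] by simp
  have pd: "partial (P k) j y = D 1 y $ (k - j)" if "y \<in> S" for y k j
    unfolding partial_def using part1[OF that] unfolding has_partial_def
    by (rule DERIV_imp_deriv)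
  have part2: "has_partial (partial (P k) j) i x (D 2 x $ (k - (i + j)))" if "x \<in> S" for x k i j
  proof -
    have d: "((\<lambda>t. D 1 (x + t *\<^sub>R axis i 1) $ (k - j)) has_real_derivative D 2 x $ (k - (i + j))) (at 0)"
      using key[OF DD[OF that, of 1], of i "k - j"] by (simp add: numeral_2_eq_2 diff_diff_eq add.commute)
    have op: "open ((\<lambda>t::real. x + t *\<^sub>R axis i 1) -` S)"
      by (rule continuous_open_vimage[OF assms(1)]) (intro continuous_intros)
    show ?thesis unfolding has_partial_def
      by (rule has_field_derivative_transform_within_open[OF d op]) (use that pd in auto)
  qed
  show ?thesis
  proof (intro conjI ballI allI impI)
    fix x k j assume "x \<in> S"
    show "\<exists>d. has_partial (P (k + j)) j x d \<and> has_partial (P k) 0 x d"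
      using part1[OF \<open>x \<in> S\<close>, of "k + j" j] part1[OF \<open>x \<in> S\<close>, of k 0] by auto
  next
    fix x k i j i' j' assume "x \<in> S" "i + j = (i' + j' :: 5)"
    then show "\<exists>d. has_partial (partial (P k) j) i x d \<and> has_partial (partial (P k) j') i' x d"
      using part2[OF \<open>x \<in> S\<close>, of k j i] part2[OF \<open>x \<in> S\<close>, of k j' i'] by auto
  qed
qed

end
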